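(* Let $\Gamma$ be an imprimitive geodesic-transitive graph. If $\Gamma$ is bipartite, then each halved graph of $\Gamma$ is geodesic-transitive. If $\Gamma$ is antipodal, then its folded graph is geodesic-transitive.
   Context: All graphs are finite, simple, undirected, connected. A geodesic of length $\ell$ is a vertex sequence $(v_0,\dots,v_\ell)$ with consecutive vertices adjacent and $d(v_0,v_\ell)=\ell$; a graph is geodesic-transitive if its automorphism group is transitive on geodesics of each length. For a graph of diameter $d$, the distance-$i$ graph $\Gamma^{(i)}$ joins vertices at distance $i$ in $\Gamma$; $\Gamma$ is imprimitive if some $\Gamma^{(i)}$, $1\le i\le d$, is disconnected. For a connected bipartite graph of diameter $\ge2$, a halved graph is the graph induced by $\Gamma^{(2)}$ on one of the two parts. A graph of diameter $d\ge2$ is antipodal if $\Gamma^{(d)}$ is a disjoint union of cliques (i.e. being equal or at distance $d$ is an equivalence relation); its folded graph has these equivalence classes as vertices, two classes being adjacent iff some vertex of one is adjacent in $\Gamma$ to some vertex of the other. *)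

theory Defs
  imports Main
begin

definition walk :: "'a set \<Rightarrow> ('a \<Rightarrow> 'a \<Rightarrow> bool) \<Rightarrow> 'a list \<Rightarrow> bool" where
  "walk V E xs \<longleftrightarrow> xs \<noteq> [] \<and> set xs \<subseteq> V \<and>
     (\<forall>i. i + 1 < length xs \<longrightarrow> E (xs ! i) (xs ! (i + 1)))"

definition connected_graph :: "'a set \<Rightarrow> ('a \<Rightarrow> 'a \<Rightarrow> bool) \<Rightarrow> bool" where
  "connected_graph V E \<longleftrightarrow>
     (\<forall>u\<in>V. \<forall>v\<in>V. \<exists>xs. walk V E xs \<and> hd xs = u \<and> last xs = v)"

definition gdist :: "'a set \<Rightarrow> ('a \<Rightarrow> 'a \<Rightarrow> bool) \<Rightarrow> 'a \<Rightarrow> 'a \<Rightarrow> nat" where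
  "gdist V E u v = (LEAST n. \<exists>xs. walk V E xs \<and> hd xs = u \<and> last xs = v \<and> length xs = n + 1)"

definition graph :: "'a set \<Rightarrow> ('a \<Rightarrow> 'a \<Rightarrow> bool) \<Rightarrow> bool" where
  "graph V E \<longleftrightarrow> finite V \<and> V \<noteq> {} \<and> (\<forall>u v. E u v \<longrightarrow> u \<in> V \<and> v \<in> V) \<and>
     (\<forall>u v. E u v \<longrightarrow> E v u) \<and> (\<forall>u. \<not> E u u) \<and> connected_graph V E"

definition geodesic :: "'a set \<Rightarrow> ('a \<Rightarrow> 'a \<Rightarrow> bool) \<Rightarrow> 'a list \<Rightarrow> bool" where
  "geodesic V E xs \<longleftrightarrow> walk V E xs \<and> gdist V E (hd xs) (last xs) = length xs - 1"

definition automorphism :: "'a set \<Rightarrow> ('a \<Rightarrow> 'a \<Rightarrow> bool) \<Rightarrow> ('a \<Rightarrow> 'a) \<Rightarrow> bool" where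
  "automorphism V E \<sigma> \<longleftrightarrow> bij_betw \<sigma> V V \<and> (\<forall>u\<in>V. \<forall>v\<in>V. E u v \<longleftrightarrow> E (\<sigma> u) (\<sigma> v))"

definition geodesic_transitive :: "'a set \<Rightarrow> ('a \<Rightarrow> 'a \<Rightarrow> bool) \<Rightarrow> bool" where
  "geodesic_transitive V E \<longleftrightarrow>
     (\<forall>xs ys. geodesic V E xs \<and> geodesic V E ys \<and> length xs = length ys \<longrightarrow>
        (\<exists>\<sigma>. automorphism V E \<sigma> \<and> map \<sigma> xs = ys))"

definition diameter :: "'a set \<Rightarrow> ('a \<Rightarrow> 'a \<Rightarrow> bool) \<Rightarrow> nat" where
  "diameter V E = Max {gdist V E u v | u v. u \<in> V \<and> v \<in> V}"

definition distance_graph :: "'a set \<Rightarrow> ('a \<Rightarrow> 'a \<Rightarrow> bool) \<Rightarrow> nat \<Rightarrow> 'a \<Rightarrow> 'a \<Rightarrow> bool" where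
  "distance_graph V E i u v \<longleftrightarrow> u \<in> V \<and> v \<in> V \<and> gdist V E u v = i"

definition imprimitive :: "'a set \<Rightarrow> ('a \<Rightarrow> 'a \<Rightarrow> bool) \<Rightarrow> bool" where
  "imprimitive V E \<longleftrightarrow>
     (\<exists>i. 1 \<le> i \<and> i \<le> diameter V E \<and> \<not> connected_graph V (distance_graph V E i))"

definition bipartition :: "'a set \<Rightarrow> ('a \<Rightarrow> 'a \<Rightarrow> bool) \<Rightarrow> 'a set \<Rightarrow> 'a set \<Rightarrow> bool" where
  "bipartition V E A B \<longleftrightarrow> A \<union> B = V \<and> A \<inter> B = {} \<and>
     (\<forall>u v. E u v \<longrightarrow> (u \<in> A \<and> v \<in> B) \<or> (u \<in> B \<and> v \<in> A))"

definition bipartite :: "'a set \<Rightarrow> ('a \<Rightarrow> 'a \<Rightarrow> bool) \<Rightarrow> bool" where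
  "bipartite V E \<longleftrightarrow> (\<exists>A B. bipartition V E A B)"

definition halved_adj :: "'a set \<Rightarrow> ('a \<Rightarrow> 'a \<Rightarrow> bool) \<Rightarrow> 'a set \<Rightarrow> 'a \<Rightarrow> 'a \<Rightarrow> bool" where
  "halved_adj V E A u v \<longleftrightarrow> u \<in> A \<and> v \<in> A \<and> gdist V E u v = 2"

definition antipodal_rel :: "'a set \<Rightarrow> ('a \<Rightarrow> 'a \<Rightarrow> bool) \<Rightarrow> ('a \<times> 'a) set" where
  "antipodal_rel V E = {(u, v). u \<in> V \<and> v \<in> V \<and> (u = v \<or> gdist V E u v = diameter V E)}"

definition antipodal :: "'a set \<Rightarrow> ('a \<Rightarrow> 'a \<Rightarrow> bool) \<Rightarrow> bool" where
  "antipodal V E \<longleftrightarrow> 2 \<le> diameter V E \<and> equiv V (antipodal_rel V E)"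

definition folded_vertices :: "'a set \<Rightarrow> ('a \<Rightarrow> 'a \<Rightarrow> bool) \<Rightarrow> 'a set set" where
  "folded_vertices V E = V // antipodal_rel V E"

definition folded_adj :: "'a set \<Rightarrow> ('a \<Rightarrow> 'a \<Rightarrow> bool) \<Rightarrow> 'a set \<Rightarrow> 'a set \<Rightarrow> bool" where
  "folded_adj V E C D \<longleftrightarrow> C \<in> folded_vertices V E \<and> D \<in> folded_vertices V E \<and>
     (\<exists>u\<in>C. \<exists>v\<in>D. E u v)"

end

theory Submission
  imports Defs
begin


lemma walk_Nil[simp]: "\<not> walk V E []" by (simp add: walk_def)
lemma walk_single[simp]: "walk V E [x] \<longleftrightarrow> x \<in> V" by (simp add: walk_def)

lemma walk_Cons2[simp]: "walk V E (x#y#xs) \<longleftrightarrow> x \<in> V \<and> E x y \<and> walk V E (y#xs)"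
proof
  assume w: "walk V E (x#y#xs)"
  have "0 + 1 < length (x#y#xs)" by simp
  hence "E ((x#y#xs)!0) ((x#y#xs)!(0+1))" using w unfolding walk_def by blast
  moreover have "walk V E (y#xs)" unfolding walk_def
  proof (intro conjI allI impI)
    fix i assume "i + 1 < length (y#xs)"
    hence "Suc i + 1 < length (x#y#xs)" by simp
    hence "E ((x#y#xs)!Suc i) ((x#y#xs)!(Suc i+1))" using w unfolding walk_def by blast
    thus "E ((y#xs)!i) ((y#xs)!(i+1))" by simp
  qed (use w in \<open>auto simp: walk_def\<close>)
  moreover have "x \<in> V" using w by (simp add: walk_def)
  ultimately show "x \<in> V \<and> E x y \<and> walk V E (y#xs)" by simp
next
  assume h: "x \<in> V \<and> E x y \<and> walk V E (y#xs)"
  show "walk V E (x#y#xs)" unfolding walk_def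
  proof (intro conjI allI impI)
    fix i assume i: "i + 1 < length (x#y#xs)"
    show "E ((x#y#xs)!i) ((x#y#xs)!(i+1))"
    proof (cases i)
      case 0 then show ?thesis using h by simp
    next
      case (Suc j)
      then have "j + 1 < length (y#xs)" using i by simp
      then have "E ((y#xs)!j) ((y#xs)!(j+1))" using h unfolding walk_def by blast
      then show ?thesis using Suc by simp
    qed
  qed (use h in \<open>auto simp: walk_def\<close>)
qed

lemma walk_set: "walk V E xs \<Longrightarrow> set xs \<subseteq> V" by (simp add: walk_def)

lemma walk_append:
  "xs \<noteq> [] \<Longrightarrow> ys \<noteq> [] \<Longrightarrow> walk V E (xs @ ys) \<longleftrightarrow> walk V E xs \<and> walk V E ys \<and> E (last xs) (hd ys)"
proof (induction xs rule: induct_list012)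
  case (2 x)
  then obtain y ys' where "ys = y # ys'" by (cases ys) auto
  then show ?case by auto
next
  case (3 x y zs)
  then show ?case by auto
qed simp

lemma walk_rev: "(\<forall>u v. E u v \<longrightarrow> E v u) \<Longrightarrow> walk V E xs \<Longrightarrow> walk V E (rev xs)"
proof (induction xs rule: induct_list012)
  case (3 x y zs)
  have "walk V E (rev (y#zs) @ [x])"
    using 3 by (subst walk_append) auto
  then show ?case by simp
qed auto

lemma gdist_le: "walk V E xs \<Longrightarrow> gdist V E (hd xs) (last xs) \<le> length xs - 1"
  unfolding gdist_def
  by (rule Least_le) (cases xs, auto)

lemma gdist_walk:
  assumes "connected_graph V E" "u \<in> V" "v \<in> V"
  shows "\<exists>xs. walk V E xs \<and> hd xs = u \<and> last xs = v \<and> length xs = gdist V E u v + 1"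
proof -
  obtain xs where xs: "walk V E xs" "hd xs = u" "last xs = v"
    using assms unfolding connected_graph_def by blast
  have "xs \<noteq> []" using xs(1) by (cases xs) auto
  hence "length xs = (length xs - 1) + 1" by simp
  hence "\<exists>n xs. walk V E xs \<and> hd xs = u \<and> last xs = v \<and> length xs = n + 1"
    using xs by blast
  thus ?thesis unfolding gdist_def by (rule LeastI_ex)
qed

lemma gdist_sym:
  assumes "connected_graph V E" "\<forall>u v. E u v \<longrightarrow> E v u" "u \<in> V" "v \<in> V"
  shows "gdist V E u v = gdist V E v u"
proof -
  have *: "gdist V E b a \<le> gdist V E a b" if ab: "a \<in> V" "b \<in> V" for a b
  proof -
    obtain xs where xs: "walk V E xs" "hd xs = a" "last xs = b" "length xs = gdist V E a b + 1"
      using gdist_walk[OF assms(1) ab] by blast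
    have "walk V E (rev xs)" using walk_rev[OF assms(2) xs(1)] .
    from gdist_le[OF this] xs show ?thesis
      by (cases xs) (auto simp: hd_rev last_rev)
  qed
  show ?thesis using *[of u v] *[of v u] assms by simp
qed

lemma gdist_triangle:
  assumes "connected_graph V E" "u \<in> V" "v \<in> V" "w \<in> V"
  shows "gdist V E u w \<le> gdist V E u v + gdist V E v w"
proof -
  obtain xs where xs: "walk V E xs" "hd xs = u" "last xs = v" "length xs = gdist V E u v + 1"
    using gdist_walk[OF assms(1,2,3)] by blast
  obtain ys where ys: "walk V E ys" "hd ys = v" "last ys = w" "length ys = gdist V E v w + 1"
    using gdist_walk[OF assms(1,3,4)] by blast
  show ?thesis
  proof (cases "tl ys = []")
    case True
    then have "ys = [v]" using ys by (cases ys) auto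
    then show ?thesis using ys xs by simp
  next
    case False
    have ysne: "ys = hd ys # tl ys" using ys(4) by (cases ys) auto
    obtain y ys' where tl: "tl ys = y # ys'" using False by (cases "tl ys") auto
    have ysc: "ys = v # y # ys'" using ysne tl ys(2) by simp
    have xne: "xs \<noteq> []" using xs(4) by auto
    have "walk V E (xs @ (y # ys'))"
      using xs(1,3) ys(1) ysc xne by (subst walk_append) auto
    from gdist_le[OF this] have "gdist V E (hd (xs @ y # ys')) (last (xs @ y # ys')) \<le> length (xs @ y # ys') - 1" .
    moreover have "hd (xs @ y # ys') = u" using xne xs(2) by simp
    moreover have "last (xs @ y # ys') = w" using ys(3) ysc by simp
    moreover have "length (xs @ y # ys') - 1 = gdist V E u v + gdist V E v w" using xs(4) ys(4) ysc by simp
    ultimately show ?thesis by simp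
  qed
qed

lemma gdist_0:
  assumes "connected_graph V E" "u \<in> V" "v \<in> V" "gdist V E u v = 0"
  shows "u = v"
proof -
  obtain xs where xs: "walk V E xs" "hd xs = u" "last xs = v" "length xs = 1"
    using gdist_walk[OF assms(1,2,3)] assms(4) by auto
  then show ?thesis by (cases xs) auto
qed

lemma gdist_1:
  assumes "connected_graph V E" "u \<in> V" "v \<in> V" "gdist V E u v = 1"
  shows "E u v"
proof -
  obtain xs where xs: "walk V E xs" "hd xs = u" "last xs = v" "length xs = 2"
    using gdist_walk[OF assms(1,2,3)] assms(4) by auto
  have "\<exists>a b. xs = [a,b]" using xs(4) by (auto simp: length_Suc_conv numeral_2_eq_2)
  then obtain a b where "xs = [a,b]" by blast
  then show ?thesis using xs by auto
qed

lemma gdist_self: "u \<in> V \<Longrightarrow> gdist V E u u = 0"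
  using gdist_le[of V E "[u]"] by simp

lemma gdist_adj: "u \<in> V \<Longrightarrow> v \<in> V \<Longrightarrow> E u v \<Longrightarrow> gdist V E u v \<le> 1"
  using gdist_le[of V E "[u,v]"] by simp

lemma aut_walk: "automorphism V E \<sigma> \<Longrightarrow> walk V E xs \<Longrightarrow> walk V E (map \<sigma> xs)"
proof (induction xs rule: induct_list012)
  case (2 x)
  then show ?case by (auto simp: automorphism_def bij_betw_apply)
next
  case (3 x y zs)
  then have "y \<in> V" using walk_set by fastforce
  with 3 show ?case by (auto simp: automorphism_def bij_betw_apply)
qed simp

lemma aut_inv:
  assumes "automorphism V E \<sigma>"
  shows "automorphism V E (inv_into V \<sigma>)"
proof -
  have b: "bij_betw \<sigma> V V" using assms by (simp add: automorphism_def)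
  have bi: "bij_betw (inv_into V \<sigma>) V V" using bij_betw_inv_into[OF b] .
  show ?thesis unfolding automorphism_def
  proof (intro conjI ballI bi)
    fix u v assume uv: "u \<in> V" "v \<in> V"
    have "inv_into V \<sigma> u \<in> V" "inv_into V \<sigma> v \<in> V" using bi uv bij_betw_apply by fastforce+
    moreover have "\<sigma> (inv_into V \<sigma> u) = u" "\<sigma> (inv_into V \<sigma> v) = v"
      using uv b by (simp_all add: bij_betw_inv_into_right)
    ultimately show "E u v = E (inv_into V \<sigma> u) (inv_into V \<sigma> v)"
      using assms unfolding automorphism_def by metis
  qed
qed

lemma aut_gdist_le:
  assumes "connected_graph V E" "automorphism V E \<sigma>" "u \<in> V" "v \<in> V"
  shows "gdist V E (\<sigma> u) (\<sigma> v) \<le> gdist V E u v"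
proof -
  obtain xs where xs: "walk V E xs" "hd xs = u" "last xs = v" "length xs = gdist V E u v + 1"
    using gdist_walk[OF assms(1,3,4)] by blast
  from gdist_le[OF aut_walk[OF assms(2) xs(1)]] xs show ?thesis
    by (cases xs) (auto simp: last_map)
qed

lemma aut_gdist:
  assumes "connected_graph V E" "automorphism V E \<sigma>" "u \<in> V" "v \<in> V"
  shows "gdist V E (\<sigma> u) (\<sigma> v) = gdist V E u v"
proof -
  have b: "bij_betw \<sigma> V V" using assms by (simp add: automorphism_def)
  have "\<sigma> u \<in> V" "\<sigma> v \<in> V" using b assms bij_betw_apply by fastforce+
  from aut_gdist_le[OF assms(1) aut_inv[OF assms(2)] this]
  have "gdist V E u v \<le> gdist V E (\<sigma> u) (\<sigma> v)"
    using b assms(3,4) by (simp add: bij_betw_inv_into_left)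
  with aut_gdist_le[OF assms] show ?thesis by simp
qed



fun evens :: "'a list \<Rightarrow> 'a list" where
  "evens [] = []"
| "evens [x] = [x]"
| "evens (x#y#r) = x # evens r"

lemma evens_map: "evens (map f xs) = map f (evens xs)"
  by (induction xs rule: evens.induct) auto

lemma bip_edge: "bipartition V E A B \<Longrightarrow> E x y \<Longrightarrow> (x \<in> A \<longleftrightarrow> y \<notin> A)"
  unfolding bipartition_def by blast

lemma parity:
  assumes "bipartition V E A B" "walk V E xs"
  shows "hd xs \<in> A \<longleftrightarrow> (last xs \<in> A \<longleftrightarrow> odd (length xs))"
  using assms(2)
proof (induction xs rule: induct_list012)
  case (3 x y zs)
  have w: "walk V E (y#zs)" and exy: "E x y" using "3.prems" by simp_all
  have e: "x \<in> A \<longleftrightarrow> y \<notin> A" using bip_edge[OF assms(1) exy] .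
  have ih: "y \<in> A \<longleftrightarrow> (last (y#zs) \<in> A \<longleftrightarrow> odd (length (y#zs)))"
    using "3.IH"(2)[OF w] by (simp only: list.sel(1))
  have l: "last (x#y#zs) = last (y#zs)" by simp
  have o: "odd (length (x#y#zs)) \<longleftrightarrow> \<not> odd (length (y#zs))" by simp
  show ?case unfolding l o list.sel(1) using e ih by blast
next
  case (2 x) then show ?case by simp
next
  case 1 then show ?case by simp
qed

lemma halve:
  assumes bp: "bipartition V E A B" and conn: "connected_graph V E" and "walk V E ys" "hd ys \<in> A" "last ys \<in> A"
  shows "\<exists>zs. walk A (halved_adj V E A) zs \<and> hd zs = hd ys \<and> last zs = last ys
             \<and> 2 * (length zs - 1) \<le> length ys - 1"
  using assms(2-)
proof (induction ys rule: evens.induct)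
  case (2 x)
  then show ?case by (intro exI[of _ "[x]"]) simp
next
  case (3 x y r)
  have xA: "x \<in> A" using 3 by simp
  have exy: "E x y" and wr: "walk V E (y#r)" and xV: "x \<in> V" using "3.prems" by auto
  have yA: "y \<notin> A" using bip_edge[OF bp exy] xA by simp
  show ?case
  proof (cases r)
    case Nil
    then show ?thesis using 3 yA by simp
  next
    case (Cons c r')
    have eyc: "E y c" and wc: "walk V E (c#r')" using wr Cons by auto
    have cA: "c \<in> A" using bip_edge[OF bp eyc] yA by simp
    have lr: "last r \<in> A" using "3.prems" Cons by simp
    obtain zs where zs: "walk A (halved_adj V E A) zs" "hd zs = hd r" "last zs = last r"
      "2 * (length zs - 1) \<le> length r - 1"
      proof -
      have "walk V E r" "hd r \<in> A" using wc Cons cA by simp_all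
      from "3.IH"[OF conn this lr] show ?thesis using that by blast
    qed
    show ?thesis
    proof (cases "x = c")
      case True
      then show ?thesis using zs Cons by (intro exI[of _ zs]) auto
    next
      case False
      have cV: "c \<in> V" "y \<in> V" using wc wr walk_set by fastforce+
      have g2: "gdist V E x c \<le> 2" using gdist_le[of V E "[x,y,c]"] xV cV exy eyc by simp
      have n0: "gdist V E x c \<noteq> 0" using gdist_0[OF conn xV cV(1)] False by blast
      have n1: "gdist V E x c \<noteq> 1" using gdist_1[OF conn xV cV(1)] bip_edge[OF bp, of x c] xA cA by blast
      have h: "halved_adj V E A x c" unfolding halved_adj_def using xA cA g2 n0 n1 by simp
      obtain zs' where zsc: "zs = c # zs'" using zs(1,2) Cons by (cases zs) auto
      have "walk A (halved_adj V E A) (x # zs)" using zs(1) zsc h xA by simp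
      then show ?thesis using zs zsc Cons by (intro exI[of _ "x#zs"]) auto
    qed
  qed
qed simp

lemma lift_halved:
  assumes conn: "connected_graph V E" and AV: "A \<subseteq> V" and "walk A (halved_adj V E A) xs"
  shows "\<exists>ys. walk V E ys \<and> length ys = 2 * length xs - 1 \<and> evens ys = xs
              \<and> hd ys = hd xs \<and> last ys = last xs"
  using assms(3)
proof (induction xs rule: induct_list012)
  case (2 x)
  then show ?case using AV by (intro exI[of _ "[x]"]) auto
next
  case (3 x y zs)
  have h: "halved_adj V E A x y" and w: "walk A (halved_adj V E A) (y#zs)" using "3.prems" by simp_all
  have xA: "x \<in> A" "y \<in> A" and g: "gdist V E x y = 2" using h by (simp_all add: halved_adj_def)
  have xyV: "x \<in> V" "y \<in> V" using xA AV by auto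
  obtain ps where ps: "walk V E ps" "hd ps = x" "last ps = y" "length ps = 2 + 1"
    using gdist_walk[OF conn xyV] g by metis
  obtain a b c where "ps = [a,b,c]" using ps(4)
    by (cases ps; cases "tl ps"; cases "tl (tl ps)") auto
  then have psw: "ps = [x,b,y]" using ps(2,3) by simp
  have ex: "\<exists>ys. walk V E ys \<and> length ys = 2 * length (y#zs) - 1 \<and> evens ys = y#zs
              \<and> hd ys = hd (y#zs) \<and> last ys = last (y#zs)" using "3.IH"(2)[OF w] .
  then obtain ys where ys: "walk V E ys" "length ys = 2 * length (y#zs) - 1" "evens ys = y#zs"
      "hd ys = hd (y#zs)" "last ys = last (y#zs)"
    by (elim exE conjE) 
  obtain ys' where ysc: "ys = y # ys'" using ys(1,4) by (cases ys) auto
  have wl: "walk V E (x # b # ys)" using ps(1) psw ys(1) ysc by simp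
  have l1: "length (x # b # ys) = 2 * length (x#y#zs) - 1" using ys(2) by simp
  have l2: "evens (x # b # ys) = x#y#zs" using ys(3) by simp
  have l3: "last (x # b # ys) = last (x#y#zs)" using ys(5) ysc by simp
  show ?case using wl l1 l2 l3 by (intro exI[of _ "x # b # ys"]) simp
qed simp

lemma halved_geo_lift:
  assumes bp: "bipartition V E A B" and conn: "connected_graph V E"
    and g: "geodesic A (halved_adj V E A) xs"
  shows "\<exists>ys. geodesic V E ys \<and> length ys = 2 * length xs - 1 \<and> evens ys = xs
              \<and> hd ys = hd xs"
proof -
  have AV: "A \<subseteq> V" using bp by (auto simp: bipartition_def)
  have wx: "walk A (halved_adj V E A) xs" and gx: "gdist A (halved_adj V E A) (hd xs) (last xs) = length xs - 1"
    using g by (simp_all add: geodesic_def)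
  obtain ys where ys: "walk V E ys" "length ys = 2 * length xs - 1" "evens ys = xs"
              "hd ys = hd xs" "last ys = last xs"
    using lift_halved[OF conn AV wx] by blast
  have xne: "xs \<noteq> []" using wx by (cases xs) auto
  have hA: "hd xs \<in> A" "last xs \<in> A" using wx xne walk_set by fastforce+
  have le: "gdist V E (hd xs) (last xs) \<le> 2 * (length xs - 1)"
    using gdist_le[OF ys(1)] ys(2,4,5) by simp
  have ge: "2 * (length xs - 1) \<le> gdist V E (hd xs) (last xs)"
  proof -
    obtain zs where zs: "walk V E zs" "hd zs = hd xs" "last zs = last xs"
        "length zs = gdist V E (hd xs) (last xs) + 1"
      using gdist_walk[OF conn, of "hd xs" "last xs"] hA AV by auto
    obtain ws where ws: "walk A (halved_adj V E A) ws" "hd ws = hd xs" "last ws = last xs"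
        "2 * (length ws - 1) \<le> length zs - 1"
      using halve[OF bp conn zs(1)] zs(2,3) hA by auto
    have "gdist A (halved_adj V E A) (hd ws) (last ws) \<le> length ws - 1" using gdist_le[OF ws(1)] .
    then have "length xs - 1 \<le> length ws - 1" using gx ws(2,3) by simp
    then show ?thesis using ws(4) zs(4) by simp
  qed
  have "geodesic V E ys" unfolding geodesic_def using ys le ge xne by auto
  then show ?thesis using ys by blast
qed

lemma aut_parity:
  assumes bp: "bipartition V E A B" and conn: "connected_graph V E"
    and aut: "automorphism V E \<sigma>" and a0: "a0 \<in> A" "\<sigma> a0 \<in> A" and v: "v \<in> V"
  shows "\<sigma> v \<in> A \<longleftrightarrow> v \<in> A"
proof -
  have AV: "A \<subseteq> V" using bp by (auto simp: bipartition_def)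
  obtain zs where zs: "walk V E zs" "hd zs = a0" "last zs = v"
    using gdist_walk[OF conn, of a0 v] a0 AV v by auto
  have zne: "zs \<noteq> []" using zs by (cases zs) auto
  have w2: "walk V E (map \<sigma> zs)" using aut_walk[OF aut zs(1)] .
  have p1: "v \<in> A \<longleftrightarrow> odd (length zs)" using parity[OF bp zs(1)] zs a0 by simp
  have p2: "\<sigma> v \<in> A \<longleftrightarrow> odd (length zs)" using parity[OF bp w2] zs zne a0 by (simp add: hd_map last_map)
  show ?thesis using p1 p2 by simp
qed

theorem halved_gt:
  assumes gr: "graph V E" and gt: "geodesic_transitive V E" and bp: "bipartition V E A B"
  shows "geodesic_transitive A (halved_adj V E A)"
  unfolding geodesic_transitive_def
proof (intro allI impI)
  fix xs ys assume h: "geodesic A (halved_adj V E A) xs \<and> geodesic A (halved_adj V E A) ys \<and> length xs = length ys"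
  have conn: "connected_graph V E" using gr by (simp add: graph_def)
  have AV: "A \<subseteq> V" and VAB: "V = A \<union> B" and dj: "A \<inter> B = {}" using bp by (auto simp: bipartition_def)
  obtain lx where lx: "geodesic V E lx" "length lx = 2 * length xs - 1" "evens lx = xs" "hd lx = hd xs"
    using halved_geo_lift[OF bp conn] h by blast
  obtain ly where ly: "geodesic V E ly" "length ly = 2 * length ys - 1" "evens ly = ys" "hd ly = hd ys"
    using halved_geo_lift[OF bp conn] h by blast
  obtain \<sigma> where s: "automorphism V E \<sigma>" "map \<sigma> lx = ly"
    using gt lx ly h unfolding geodesic_transitive_def by metis
  have mp: "map \<sigma> xs = ys" using evens_map[of \<sigma> lx] s(2) lx(3) ly(3) by simp
  have xne: "xs \<noteq> []" "lx \<noteq> []" using h lx(1) by (auto simp: geodesic_def)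
  have wxy: "walk A (halved_adj V E A) xs" "walk A (halved_adj V E A) ys" using h by (simp_all add: geodesic_def)
  have yne: "ys \<noteq> []" using wxy(2) by (cases ys) auto
  have a0: "hd xs \<in> A" "hd ys \<in> A"
    using walk_set[OF wxy(1)] walk_set[OF wxy(2)] xne(1) yne hd_in_set by blast+
  have sa0: "\<sigma> (hd xs) = hd ys" using s(2) lx(4) ly(4) xne by (metis hd_map)
  have par: "\<sigma> v \<in> A \<longleftrightarrow> v \<in> A" if "v \<in> V" for v
    using aut_parity[OF bp conn s(1) a0(1) _ that] sa0 a0(2) by simp
  have bV: "bij_betw \<sigma> V V" using s(1) by (simp add: automorphism_def)
  have bA: "bij_betw \<sigma> A A"
  proof -
    have inj: "inj_on \<sigma> A" using bV AV by (meson bij_betw_def inj_on_subset)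
    have "\<sigma> ` A = A"
    proof
      show "\<sigma> ` A \<subseteq> A" using par AV by auto
      show "A \<subseteq> \<sigma> ` A"
      proof
        fix a assume a: "a \<in> A"
        then obtain v where v: "v \<in> V" "a = \<sigma> v" using bV AV by (metis bij_betw_imp_surj_on imageE subsetD)
        then have "v \<in> A" using par a by auto
        then show "a \<in> \<sigma> ` A" using v by auto
      qed
    qed
    then show ?thesis using inj by (simp add: bij_betw_def)
  qed
  have "automorphism A (halved_adj V E A) \<sigma>"
    unfolding automorphism_def
  proof (intro conjI bA ballI)
    fix u v assume uv: "u \<in> A" "v \<in> A"
    then have "\<sigma> u \<in> A" "\<sigma> v \<in> A" using bA bij_betw_apply by fastforce+
    moreover have "gdist V E (\<sigma> u) (\<sigma> v) = gdist V E u v" using aut_gdist[OF conn s(1)] uv AV by auto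
    ultimately show "halved_adj V E A u v = halved_adj V E A (\<sigma> u) (\<sigma> v)"
      using uv by (simp add: halved_adj_def)
  qed
  then show "\<exists>\<sigma>. automorphism A (halved_adj V E A) \<sigma> \<and> map \<sigma> xs = ys" using mp by blast
qed



lemma diam_facts:
  assumes gr: "graph V E"
  shows "\<And>u v. u \<in> V \<Longrightarrow> v \<in> V \<Longrightarrow> gdist V E u v \<le> diameter V E"
    and "\<exists>a\<in>V. \<exists>b\<in>V. gdist V E a b = diameter V E"
proof -
  have eq: "{gdist V E u v | u v. u \<in> V \<and> v \<in> V} = (\<lambda>(u,v). gdist V E u v) ` (V \<times> V)" by auto
  have fin: "finite {gdist V E u v | u v. u \<in> V \<and> v \<in> V}" unfolding eq using gr by (simp add: graph_def)
  obtain x where x: "x \<in> V" using gr by (auto simp: graph_def)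
  have ne: "{gdist V E u v | u v. u \<in> V \<and> v \<in> V} \<noteq> {}" using x by blast
  show "\<And>u v. u \<in> V \<Longrightarrow> v \<in> V \<Longrightarrow> gdist V E u v \<le> diameter V E"
    unfolding diameter_def using fin by (intro Max_ge) auto
  from Max_in[OF fin ne] obtain a b where "a \<in> V" "b \<in> V"
    "Max {gdist V E u v | u v. u \<in> V \<and> v \<in> V} = gdist V E a b" by auto
  then show "\<exists>a\<in>V. \<exists>b\<in>V. gdist V E a b = diameter V E"
    unfolding diameter_def by metis
qed

lemma aut_R:
  assumes conn: "connected_graph V E" and aut: "automorphism V E \<sigma>" and uv: "u \<in> V" "v \<in> V"
  shows "(\<sigma> u, \<sigma> v) \<in> antipodal_rel V E \<longleftrightarrow> (u, v) \<in> antipodal_rel V E"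
proof -
  have b: "bij_betw \<sigma> V V" using aut by (simp add: automorphism_def)
  have "\<sigma> u \<in> V" "\<sigma> v \<in> V" using b uv bij_betw_apply by fastforce+
  moreover have "\<sigma> u = \<sigma> v \<longleftrightarrow> u = v" using b uv by (meson bij_betw_def inj_on_eq_iff)
  moreover have "gdist V E (\<sigma> u) (\<sigma> v) = gdist V E u v" using aut_gdist[OF conn aut uv] .
  ultimately show ?thesis using uv by (simp add: antipodal_rel_def)
qed

lemma lemL:
  assumes gr: "graph V E" and gt: "geodesic_transitive V E" and ap: "antipodal V E"
    and xu: "(x, u) \<in> antipodal_rel V E" and exy: "E x y"
  shows "\<exists>v. E u v \<and> (y, v) \<in> antipodal_rel V E"
proof -
  let ?R = "antipodal_rel V E" and ?d = "diameter V E"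
  have conn: "connected_graph V E" and sym: "\<forall>u v. E u v \<longrightarrow> E v u" and irr: "\<forall>u. \<not> E u u"
    and EV: "\<forall>u v. E u v \<longrightarrow> u \<in> V \<and> v \<in> V"
    using gr by (simp_all add: graph_def)
  have d2: "2 \<le> ?d" and eq: "equiv V ?R" using ap by (simp_all add: antipodal_def)
  have xV: "x \<in> V" "u \<in> V" using xu by (simp_all add: antipodal_rel_def)
  have yV: "y \<in> V" using EV exy by blast
  show ?thesis
  proof (cases "u = x")
    case True
    have "(y, y) \<in> ?R" using yV by (simp add: antipodal_rel_def)
    then show ?thesis using True exy by blast
  next
    case False
    have dxu: "gdist V E x u = ?d" using xu False by (simp add: antipodal_rel_def)
    have dxy: "gdist V E x y \<le> 1" using gdist_adj[where V=V and E=E, OF xV(1) yV exy] .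
    have t: "gdist V E x u \<le> gdist V E x y + gdist V E y u" using gdist_triangle[OF conn xV(1) yV xV(2)] .
    have le: "gdist V E y u \<le> ?d" using diam_facts(1)[OF gr yV xV(2)] .
    have ne: "gdist V E y u \<noteq> ?d"
    proof
      assume "gdist V E y u = ?d"
      then have "(y, u) \<in> ?R" using yV xV by (simp add: antipodal_rel_def)
      then have "(x, y) \<in> ?R" using xu eq by (meson equiv_def sym_def trans_def)
      then show False using irr exy dxy d2 by (auto simp: antipodal_rel_def)
    qed
    have dyu: "gdist V E y u = ?d - 1" using t dxu dxy le ne by linarith
    obtain ps where ps: "walk V E ps" "hd ps = y" "last ps = u" "length ps = gdist V E y u + 1"
      using gdist_walk[OF conn yV xV(2)] by blast
    have gps: "geodesic V E ps" using ps dyu by (simp add: geodesic_def)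
    obtain a b where ab: "a \<in> V" "b \<in> V" "gdist V E a b = ?d" using diam_facts(2)[OF gr] by blast
    obtain qs where qs: "walk V E qs" "hd qs = a" "last qs = b" "length qs = gdist V E a b + 1"
      using gdist_walk[OF conn ab(1,2)] by blast
    define ps0 where "ps0 = butlast qs"
    have qne: "qs \<noteq> []" using qs(1) by (cases qs) auto
    have qsplit: "qs = ps0 @ [b]" using qne qs(3) unfolding ps0_def by (metis append_butlast_last_id)
    have lps0: "length ps0 = ?d" using qs(4) ab(3) unfolding ps0_def by simp
    have p0ne: "ps0 \<noteq> []" using lps0 d2 by auto
    have wq: "walk V E (ps0 @ [b])" using qs(1) qsplit by simp
    then have wp0: "walk V E ps0" and ecb: "E (last ps0) b"
      using walk_append[OF p0ne, of "[b]" V E] by auto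
    have hp0: "hd ps0 = a" using qs(2) qsplit p0ne by (metis hd_append2)
    have cV: "last ps0 \<in> V" using walk_set[OF wp0] p0ne by auto
    have g1: "gdist V E a (last ps0) \<le> ?d - 1" using gdist_le[OF wp0] hp0 lps0 by simp
    have g2: "?d \<le> gdist V E a (last ps0) + gdist V E (last ps0) b"
      using gdist_triangle[OF conn ab(1) cV ab(2)] ab(3) by simp
    have g3: "gdist V E (last ps0) b \<le> 1" using gdist_adj[where V=V and E=E, OF cV ab(2) ecb] .
    have gp0: "geodesic V E ps0" unfolding geodesic_def using wp0 hp0 lps0 g1 g2 g3 by simp
    have "length ps0 = length ps" using lps0 ps(4) dyu d2 by simp
    then obtain \<sigma> where s: "automorphism V E \<sigma>" "map \<sigma> ps0 = ps"
      using gt gp0 gps unfolding geodesic_transitive_def by blast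
    have su: "\<sigma> (last ps0) = u" using s(2) ps(3) p0ne by (metis last_map)
    have sy: "\<sigma> a = y" using s(2) ps(2) p0ne hp0 by (metis hd_map)
    have euv: "E u (\<sigma> b)" using s(1) ecb cV ab(2) su unfolding automorphism_def by metis
    have sbV: "\<sigma> b \<in> V" using s(1) ab(2) by (meson automorphism_def bij_betw_apply)
    have "gdist V E (\<sigma> a) (\<sigma> b) = ?d" using aut_gdist[OF conn s(1) ab(1,2)] ab(3) by simp
    then have "(y, \<sigma> b) \<in> ?R" using sy yV sbV by (simp add: antipodal_rel_def)
    then show ?thesis using euv by blast
  qed
qed

lemma cls_img:
  assumes conn: "connected_graph V E" and aut: "automorphism V E \<sigma>" and eq: "equiv V (antipodal_rel V E)"
    and a: "a \<in> V"
  shows "\<sigma> ` (antipodal_rel V E `` {a}) = antipodal_rel V E `` {\<sigma> a}"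
proof
  let ?R = "antipodal_rel V E"
  have b: "bij_betw \<sigma> V V" using aut by (simp add: automorphism_def)
  show "\<sigma> ` (?R `` {a}) \<subseteq> ?R `` {\<sigma> a}"
  proof
    fix c assume "c \<in> \<sigma> ` (?R `` {a})"
    then obtain v where v: "(a, v) \<in> ?R" "c = \<sigma> v" by auto
    have "v \<in> V" using v(1) by (simp add: antipodal_rel_def)
    then show "c \<in> ?R `` {\<sigma> a}" using aut_R[OF conn aut a] v by simp
  qed
  show "?R `` {\<sigma> a} \<subseteq> \<sigma> ` (?R `` {a})"
  proof
    fix c assume c: "c \<in> ?R `` {\<sigma> a}"
    then have "c \<in> V" by (simp add: antipodal_rel_def)
    then obtain v where v: "v \<in> V" "c = \<sigma> v" using b by (metis bij_betw_imp_surj_on imageE)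
    then have "(a, v) \<in> ?R" using aut_R[OF conn aut a v(1)] c by simp
    then show "c \<in> \<sigma> ` (?R `` {a})" using v by auto
  qed
qed

lemma proj_walk:
  assumes eq: "equiv V (antipodal_rel V E)" and "walk V E zs"
  shows "walk (folded_vertices V E) (folded_adj V E) (map (\<lambda>z. antipodal_rel V E `` {z}) zs)"
  using assms(2)
proof (induction zs rule: induct_list012)
  case (2 x)
  then show ?case by (simp add: folded_vertices_def quotientI)
next
  case (3 x y zs)
  have xV: "x \<in> V" and exy: "E x y" and w: "walk V E (y#zs)" using "3.prems" by simp_all
  have yV: "y \<in> V" using walk_set[OF w] by simp
  have "folded_adj V E (antipodal_rel V E `` {x}) (antipodal_rel V E `` {y})"
  proof -
    have "x \<in> antipodal_rel V E `` {x}" "y \<in> antipodal_rel V E `` {y}"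
      using equiv_class_self[OF eq] xV yV by auto
    moreover have "antipodal_rel V E `` {x} \<in> V // antipodal_rel V E"
      "antipodal_rel V E `` {y} \<in> V // antipodal_rel V E" using xV yV by (simp_all add: quotientI)
    ultimately show ?thesis unfolding folded_adj_def folded_vertices_def using exy by blast
  qed
  moreover have "antipodal_rel V E `` {x} \<in> folded_vertices V E"
    using xV by (simp add: folded_vertices_def quotientI)
  moreover have "walk (folded_vertices V E) (folded_adj V E) (map (\<lambda>z. antipodal_rel V E `` {z}) (y#zs))"
    using "3.IH"(2)[OF w] .
  ultimately show ?case by (simp only: list.map walk_Cons2)
qed simp

lemma lift_fold:
  assumes gr: "graph V E" and gt: "geodesic_transitive V E" and ap: "antipodal V E"
    and "walk (folded_vertices V E) (folded_adj V E) Cs"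
  shows "\<And>u. u \<in> hd Cs \<Longrightarrow> \<exists>us. walk V E us \<and> hd us = u \<and> map (\<lambda>z. antipodal_rel V E `` {z}) us = Cs"
  using assms(4)
proof (induction Cs rule: induct_list012)
  case (2 C u)
  have eq: "equiv V (antipodal_rel V E)" using ap by (simp add: antipodal_def)
  have C: "C \<in> V // antipodal_rel V E" using "2.prems" by (simp add: folded_vertices_def)
  have uC: "u \<in> C" using "2.prems" by simp
  have uV: "u \<in> V" using in_quotient_imp_subset[OF eq C] uC by blast
  obtain a where a: "C = antipodal_rel V E `` {a}" "a \<in> V" using C by (auto elim: quotientE)
  have "(a, u) \<in> antipodal_rel V E" using a uC by simp
  then have "C = antipodal_rel V E `` {u}" using a(1) equiv_class_eq[OF eq] by blast
  then show ?case using uV by (intro exI[of _ "[u]"]) simp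
next
  case (3 C D rest u)
  have eq: "equiv V (antipodal_rel V E)" using ap by (simp add: antipodal_def)
  have fa: "folded_adj V E C D" and w: "walk (folded_vertices V E) (folded_adj V E) (D # rest)"
    and Cv: "C \<in> folded_vertices V E" using "3.prems" by simp_all
  have uC: "u \<in> C" using "3.prems" by simp
  obtain x y where xy: "x \<in> C" "y \<in> D" "E x y" and CD: "C \<in> V // antipodal_rel V E" "D \<in> V // antipodal_rel V E"
    using fa unfolding folded_adj_def folded_vertices_def by blast
  have xu: "(x, u) \<in> antipodal_rel V E" using in_quotient_imp_in_rel[OF eq CD(1)] xy(1) uC by blast
  obtain v where v: "E u v" "(y, v) \<in> antipodal_rel V E" using lemL[OF gr gt ap xu xy(3)] by blast
  have vD: "v \<in> D" using in_quotient_imp_closed[OF eq CD(2) xy(2) v(2)] .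
  have ex: "\<exists>us. walk V E us \<and> hd us = v \<and> map (\<lambda>z. antipodal_rel V E `` {z}) us = D # rest"
    using "3.IH"(2)[of v, OF _ w] vD by simp
  then obtain us where us: "walk V E us" "hd us = v" "map (\<lambda>z. antipodal_rel V E `` {z}) us = D # rest"
    by (elim exE conjE)
  obtain us' where usc: "us = v # us'" using us(1,2) by (cases us) auto
  have uV: "u \<in> V" using in_quotient_imp_subset[OF eq CD(1)] uC by blast
  obtain a where a: "C = antipodal_rel V E `` {a}" "a \<in> V" using CD(1) by (auto elim: quotientE)
  have "(a, u) \<in> antipodal_rel V E" using a uC by simp
  then have Cu: "C = antipodal_rel V E `` {u}" using a(1) equiv_class_eq[OF eq] by blast
  have "walk V E (u # us)" using us(1) usc uV v(1) by simp
  then show ?case using us(3) Cu by (intro exI[of _ "u # us"]) simp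
qed simp

lemma folded_geo_lift:
  assumes gr: "graph V E" and gt: "geodesic_transitive V E" and ap: "antipodal V E"
    and g: "geodesic (folded_vertices V E) (folded_adj V E) Cs"
  shows "\<exists>us. geodesic V E us \<and> map (\<lambda>z. antipodal_rel V E `` {z}) us = Cs"
proof -
  let ?c = "\<lambda>z. antipodal_rel V E `` {z}"
  have eq: "equiv V (antipodal_rel V E)" using ap by (simp add: antipodal_def)
  have conn: "connected_graph V E" using gr by (simp add: graph_def)
  have w: "walk (folded_vertices V E) (folded_adj V E) Cs"
    and gd: "gdist (folded_vertices V E) (folded_adj V E) (hd Cs) (last Cs) = length Cs - 1"
    using g by (simp_all add: geodesic_def)
  have cne: "Cs \<noteq> []" using w by (cases Cs) auto
  have "hd Cs \<in> V // antipodal_rel V E" using walk_set[OF w] cne hd_in_set by (fastforce simp: folded_vertices_def)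
  then obtain u where u: "u \<in> hd Cs" using in_quotient_imp_non_empty[OF eq] by blast
  obtain us where us: "walk V E us" "hd us = u" "map ?c us = Cs" using lift_fold[OF gr gt ap w u] by blast
  have une: "us \<noteq> []" using us(1) by (cases us) auto
  have hV: "hd us \<in> V" "last us \<in> V" using walk_set[OF us(1)] une by auto
  have le: "gdist V E (hd us) (last us) \<le> length us - 1" using gdist_le[OF us(1)] .
  obtain zs where zs: "walk V E zs" "hd zs = hd us" "last zs = last us" "length zs = gdist V E (hd us) (last us) + 1"
    using gdist_walk[OF conn hV] by blast
  have zne: "zs \<noteq> []" using zs(1) by (cases zs) auto
  have wz: "walk (folded_vertices V E) (folded_adj V E) (map ?c zs)" using proj_walk[OF eq zs(1)] .
  have "gdist (folded_vertices V E) (folded_adj V E) (hd (map ?c zs)) (last (map ?c zs)) \<le> length (map ?c zs) - 1"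
    using gdist_le[OF wz] .
  moreover have "hd (map ?c zs) = hd Cs" using zne une zs(2) us(3) by (metis hd_map)
  moreover have "last (map ?c zs) = last Cs" using zne une zs(3) us(3) by (metis last_map)
  ultimately have ge: "length Cs - 1 \<le> gdist V E (hd us) (last us)" using gd zs(4) by simp
  have "length us = length Cs" using us(3) by auto
  then have "geodesic V E us" using le ge us(1) by (simp add: geodesic_def)
  then show ?thesis using us(3) by blast
qed

theorem folded_gt:
  assumes gr: "graph V E" and gt: "geodesic_transitive V E" and ap: "antipodal V E"
  shows "geodesic_transitive (folded_vertices V E) (folded_adj V E)"
  unfolding geodesic_transitive_def
proof (intro allI impI)
  let ?R = "antipodal_rel V E"
  let ?c = "\<lambda>z. antipodal_rel V E `` {z}"
  fix Cs Ds assume h: "geodesic (folded_vertices V E) (folded_adj V E) Cs \<and>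
     geodesic (folded_vertices V E) (folded_adj V E) Ds \<and> length Cs = length Ds"
  have eq: "equiv V ?R" using ap by (simp add: antipodal_def)
  have conn: "connected_graph V E" using gr by (simp add: graph_def)
  obtain us where us: "geodesic V E us" "map ?c us = Cs" using folded_geo_lift[OF gr gt ap] h by blast
  obtain vs where vs: "geodesic V E vs" "map ?c vs = Ds" using folded_geo_lift[OF gr gt ap] h by blast
  have "length us = length vs" using us(2) vs(2) h by auto
  then obtain \<sigma> where s: "automorphism V E \<sigma>" "map \<sigma> us = vs"
    using gt us(1) vs(1) unfolding geodesic_transitive_def by blast
  have bV: "bij_betw \<sigma> V V" using s(1) by (simp add: automorphism_def)
  let ?\<phi> = "\<lambda>C. \<sigma> ` C"
  have usV: "set us \<subseteq> V" using us(1) walk_set by (auto simp: geodesic_def)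
  have "map ?\<phi> Cs = map (\<lambda>z. \<sigma> ` (?c z)) us" using us(2) by auto
  also have "\<dots> = map (\<lambda>z. ?c (\<sigma> z)) us"
    using cls_img[OF conn s(1) eq] usV by (intro map_cong) auto
  also have "\<dots> = map ?c (map \<sigma> us)" by simp
  also have "\<dots> = Ds" using s(2) vs(2) by simp
  finally have mp: "map ?\<phi> Cs = Ds" .
  have img: "?\<phi> C \<in> V // ?R \<and> (\<exists>a\<in>V. C = ?c a \<and> ?\<phi> C = ?c (\<sigma> a))" if Cq: "C \<in> V // ?R" for C
  proof -
    obtain a where a: "C = ?c a" "a \<in> V" using Cq by (auto elim: quotientE)
    have "\<sigma> a \<in> V" using bV a(2) bij_betw_apply by fastforce
    then show ?thesis using a cls_img[OF conn s(1) eq a(2)] quotientI by metis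
  qed
  have "automorphism (folded_vertices V E) (folded_adj V E) ?\<phi>"
    unfolding automorphism_def folded_vertices_def
  proof (intro conjI ballI)
    show "bij_betw ?\<phi> (V // ?R) (V // ?R)"
      unfolding bij_betw_def
    proof
      show "inj_on ?\<phi> (V // ?R)"
      proof (rule inj_onI)
        fix C D assume C: "C \<in> V // ?R" and D: "D \<in> V // ?R" and e: "?\<phi> C = ?\<phi> D"
        then have "C \<subseteq> V" "D \<subseteq> V" using in_quotient_imp_subset[OF eq] by auto
        moreover have "inj_on \<sigma> V" using bV by (simp add: bij_betw_def)
        ultimately show "C = D" using e by (meson inj_on_image_eq_iff)
      qed
      show "?\<phi> ` (V // ?R) = V // ?R"
      proof
        show "?\<phi> ` (V // ?R) \<subseteq> V // ?R" using img by blast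
        show "V // ?R \<subseteq> ?\<phi> ` (V // ?R)"
        proof
          fix D assume D: "D \<in> V // ?R"
          obtain c where c: "D = ?c c" "c \<in> V" using D by (auto elim: quotientE)
          obtain a where a: "a \<in> V" "c = \<sigma> a" using bV c(2) by (metis bij_betw_imp_surj_on imageE)
          have "?\<phi> (?c a) = D" using cls_img[OF conn s(1) eq a(1)] a c by simp
          then show "D \<in> ?\<phi> ` (V // ?R)" using a(1) quotientI by (metis imageI)
        qed
      qed
    qed
  next
    fix C D assume C: "C \<in> V // ?R" and D: "D \<in> V // ?R"
    have CV: "C \<subseteq> V" "D \<subseteq> V" using in_quotient_imp_subset[OF eq] C D by auto
    have "(\<exists>u\<in>C. \<exists>v\<in>D. E u v) \<longleftrightarrow> (\<exists>u\<in>?\<phi> C. \<exists>v\<in>?\<phi> D. E u v)"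
    proof
      assume "\<exists>u\<in>C. \<exists>v\<in>D. E u v"
      then obtain u v where "u \<in> C" "v \<in> D" "E u v" by blast
      moreover then have "E (\<sigma> u) (\<sigma> v)" using s(1) CV unfolding automorphism_def by blast
      ultimately show "\<exists>u\<in>?\<phi> C. \<exists>v\<in>?\<phi> D. E u v" by blast
    next
      assume "\<exists>u\<in>?\<phi> C. \<exists>v\<in>?\<phi> D. E u v"
      then obtain u v where "u \<in> C" "v \<in> D" "E (\<sigma> u) (\<sigma> v)" by blast
      moreover then have "E u v" using s(1) CV unfolding automorphism_def by blast
      ultimately show "\<exists>u\<in>C. \<exists>v\<in>D. E u v" by blast
    qed
    then show "folded_adj V E C D = folded_adj V E (?\<phi> C) (?\<phi> D)"
      unfolding folded_adj_def folded_vertices_def using C D img by blast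
  qed
  then show "\<exists>\<sigma>. automorphism (folded_vertices V E) (folded_adj V E) \<sigma> \<and> map \<sigma> Cs = Ds"
    using mp by blast
qed


theorem lemma3p2:
  fixes V :: "'a set" and E :: "'a \<Rightarrow> 'a \<Rightarrow> bool"
  assumes "graph V E" and "geodesic_transitive V E" and "imprimitive V E"
  shows "(bipartite V E \<longrightarrow>
            (\<forall>A B. bipartition V E A B \<longrightarrow> geodesic_transitive A (halved_adj V E A)))
       \<and> (antipodal V E \<longrightarrow>
            geodesic_transitive (folded_vertices V E) (folded_adj V E))"
  using halved_gt[OF assms(1,2)] folded_gt[OF assms(1,2)] by blast

end
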